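(* Suppose that $G \leq \mathrm{Homeo}^+(\mathbb{R})$ acts on $\mathbb{R}$ with no fixed points, and that $G^0 \neq 1$. Let $\Omega$ be a set on which $G$ acts faithfully and $2$-transitively. Then at least one of the following happens: (1) $G^0$ is regular on $\Omega$; (2) for every $x \in \mathbb{R}$, for every orbit $O^- \subset \Omega$ of $G_x^-$ and every orbit $O^+ \subset \Omega$ of $G_x^+$, we have $|O^- \cap O^+| \leq 1$.
   Context: $\mathrm{Homeo}^+(\mathbb{R})$ is the group of orientation-preserving homeomorphisms of $\mathbb{R}$. $G^0$ denotes the subgroup of compactly supported elements of $G$. For $x \in \mathbb{R}$, $G_x$ is the stabilizer of $x$ in $G$, and $G_x^-$, $G_x^+$ are the subgroups of $G_x$ consisting of elements supported in $(-\infty, x]$ and $[x, +\infty)$ respectively (i.e. acting trivially outside these sets). A permutation group is regular if it is transitive and all point stabilizers are trivial. $2$-transitive means transitive on ordered pairs of distinct elements. *)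

theory Defs
  imports "HOL-Analysis.Analysis"
begin

definition homeo_plus :: "(real \<Rightarrow> real) set" where
  "homeo_plus = {f. (\<exists>g. homeomorphism UNIV UNIV f g) \<and> strict_mono f}"

definition homeo_subgroup :: "(real \<Rightarrow> real) set \<Rightarrow> bool" where
  "homeo_subgroup G \<longleftrightarrow> G \<subseteq> homeo_plus \<and> id \<in> G \<and>
     (\<forall>f\<in>G. \<forall>g\<in>G. f \<circ> g \<in> G) \<and> (\<forall>f\<in>G. inv f \<in> G)"

definition no_fixed_points :: "(real \<Rightarrow> real) set \<Rightarrow> bool" where
  "no_fixed_points G \<longleftrightarrow> (\<forall>x. \<exists>g\<in>G. g x \<noteq> x)"

definition compact_part :: "(real \<Rightarrow> real) set \<Rightarrow> (real \<Rightarrow> real) set" where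
  "compact_part G = {g\<in>G. compact (closure {x. g x \<noteq> x})}"

definition stab :: "(real \<Rightarrow> real) set \<Rightarrow> real \<Rightarrow> (real \<Rightarrow> real) set" where
  "stab G x = {g\<in>G. g x = x}"

definition stab_minus :: "(real \<Rightarrow> real) set \<Rightarrow> real \<Rightarrow> (real \<Rightarrow> real) set" where
  "stab_minus G x = {g\<in>stab G x. \<forall>y. y > x \<longrightarrow> g y = y}"

definition stab_plus :: "(real \<Rightarrow> real) set \<Rightarrow> real \<Rightarrow> (real \<Rightarrow> real) set" where
  "stab_plus G x = {g\<in>stab G x. \<forall>y. y < x \<longrightarrow> g y = y}"

definition is_action :: "(real \<Rightarrow> real) set \<Rightarrow> 'b set \<Rightarrow> ((real \<Rightarrow> real) \<Rightarrow> 'b \<Rightarrow> 'b) \<Rightarrow> bool" where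
  "is_action G \<Omega> act \<longleftrightarrow>
     (\<forall>g\<in>G. \<forall>a\<in>\<Omega>. act g a \<in> \<Omega>) \<and>
     (\<forall>a\<in>\<Omega>. act id a = a) \<and>
     (\<forall>f\<in>G. \<forall>g\<in>G. \<forall>a\<in>\<Omega>. act (f \<circ> g) a = act f (act g a))"

definition faithful :: "(real \<Rightarrow> real) set \<Rightarrow> 'b set \<Rightarrow> ((real \<Rightarrow> real) \<Rightarrow> 'b \<Rightarrow> 'b) \<Rightarrow> bool" where
  "faithful G \<Omega> act \<longleftrightarrow> (\<forall>g\<in>G. (\<forall>a\<in>\<Omega>. act g a = a) \<longrightarrow> g = id)"

definition transitive_on :: "(real \<Rightarrow> real) set \<Rightarrow> 'b set \<Rightarrow> ((real \<Rightarrow> real) \<Rightarrow> 'b \<Rightarrow> 'b) \<Rightarrow> bool" where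
  "transitive_on H \<Omega> act \<longleftrightarrow> (\<forall>a\<in>\<Omega>. \<forall>b\<in>\<Omega>. \<exists>h\<in>H. act h a = b)"

definition two_transitive :: "(real \<Rightarrow> real) set \<Rightarrow> 'b set \<Rightarrow> ((real \<Rightarrow> real) \<Rightarrow> 'b \<Rightarrow> 'b) \<Rightarrow> bool" where
  "two_transitive H \<Omega> act \<longleftrightarrow>
     (\<forall>a\<in>\<Omega>. \<forall>b\<in>\<Omega>. \<forall>c\<in>\<Omega>. \<forall>d\<in>\<Omega>. a \<noteq> b \<longrightarrow> c \<noteq> d \<longrightarrow>
        (\<exists>h\<in>H. act h a = c \<and> act h b = d))"

definition regular_on :: "(real \<Rightarrow> real) set \<Rightarrow> 'b set \<Rightarrow> ((real \<Rightarrow> real) \<Rightarrow> 'b \<Rightarrow> 'b) \<Rightarrow> bool" where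
  "regular_on H \<Omega> act \<longleftrightarrow> transitive_on H \<Omega> act \<and>
     (\<forall>a\<in>\<Omega>. \<forall>h\<in>H. act h a = a \<longrightarrow> h = id)"

definition orbit :: "(real \<Rightarrow> real) set \<Rightarrow> ((real \<Rightarrow> real) \<Rightarrow> 'b \<Rightarrow> 'b) \<Rightarrow> 'b \<Rightarrow> 'b set" where
  "orbit H act a = (\<lambda>h. act h a) ` H"

end

theory Submission
  imports Defs
begin

locale S5 =
  fixes G :: "(real \<Rightarrow> real) set" and \<Omega> :: "'b set" and act :: "(real \<Rightarrow> real) \<Rightarrow> 'b \<Rightarrow> 'b"
  assumes hs: "homeo_subgroup G" and nf: "no_fixed_points G"
    and ac: "is_action G \<Omega> act" and fa: "faithful G \<Omega> act" and tt: "two_transitive G \<Omega> act"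
begin

lemma G_homeo: "f \<in> G \<Longrightarrow> (\<exists>g. homeomorphism UNIV UNIV f g) \<and> strict_mono f"
  using hs unfolding homeo_subgroup_def homeo_plus_def by blast

lemma G_mono: "f \<in> G \<Longrightarrow> strict_mono f" using G_homeo by blast

lemma G_bij: "f \<in> G \<Longrightarrow> bij f"
proof -
  assume "f \<in> G"
  then obtain g where "homeomorphism UNIV UNIV f g" using G_homeo by blast
  then have "g \<circ> f = id" "f \<circ> g = id" unfolding homeomorphism_def by auto
  then show "bij f" using o_bij by blast
qed

lemma inv_left: "f \<in> G \<Longrightarrow> inv f (f z) = z"
  using G_bij bij_is_inj inv_f_f by metis

lemma inv_right: "f \<in> G \<Longrightarrow> f (inv f z) = z"
  using G_bij bij_is_surj surj_f_inv_f by metis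

lemma G_id: "id \<in> G" using hs unfolding homeo_subgroup_def by blast
lemma G_comp: "f \<in> G \<Longrightarrow> g \<in> G \<Longrightarrow> f \<circ> g \<in> G" using hs unfolding homeo_subgroup_def by blast
lemma G_inv: "f \<in> G \<Longrightarrow> inv f \<in> G" using hs unfolding homeo_subgroup_def by blast

lemma G_conj: "t \<in> G \<Longrightarrow> f \<in> G \<Longrightarrow> t \<circ> f \<circ> inv t \<in> G"
  using G_comp G_inv by blast

lemma act_closed: "g \<in> G \<Longrightarrow> a \<in> \<Omega> \<Longrightarrow> act g a \<in> \<Omega>"
  using ac unfolding is_action_def by blast
lemma act_id: "a \<in> \<Omega> \<Longrightarrow> act id a = a"
  using ac unfolding is_action_def by blast
lemma act_comp: "f \<in> G \<Longrightarrow> g \<in> G \<Longrightarrow> a \<in> \<Omega> \<Longrightarrow> act (f \<circ> g) a = act f (act g a)"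
  using ac unfolding is_action_def by blast

lemma act_inv_left: "g \<in> G \<Longrightarrow> z \<in> \<Omega> \<Longrightarrow> act (inv g) (act g z) = z"
proof -
  assume g: "g \<in> G" and z: "z \<in> \<Omega>"
  have "inv g \<circ> g = id" using inv_left[OF g] by auto
  then show ?thesis using act_comp[OF G_inv[OF g] g z] act_id[OF z] by simp
qed

lemma act_inv_right: "g \<in> G \<Longrightarrow> z \<in> \<Omega> \<Longrightarrow> act g (act (inv g) z) = z"
proof -
  assume g: "g \<in> G" and z: "z \<in> \<Omega>"
  have "g \<circ> inv g = id" using inv_right[OF g] by auto
  then show ?thesis using act_comp[OF g G_inv[OF g] z] act_id[OF z] by simp
qed

lemma act_inj: "g \<in> G \<Longrightarrow> y \<in> \<Omega> \<Longrightarrow> z \<in> \<Omega> \<Longrightarrow> act g y = act g z \<Longrightarrow> y = z"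
  using act_inv_left by metis

lemma act_conj: "t \<in> G \<Longrightarrow> f \<in> G \<Longrightarrow> a \<in> \<Omega> \<Longrightarrow>
   act (t \<circ> f \<circ> inv t) a = act t (act f (act (inv t) a))"
  by (simp add: act_comp G_comp G_inv act_closed)

lemma minus_G: "h \<in> stab_minus G y \<Longrightarrow> h \<in> G" by (simp add: stab_minus_def stab_def)
lemma plus_G: "h \<in> stab_plus G y \<Longrightarrow> h \<in> G" by (simp add: stab_plus_def stab_def)

lemma conj_minus: assumes h: "h \<in> stab_minus G y" and g: "g \<in> G"
  shows "g \<circ> h \<circ> inv g \<in> stab_minus G (g y)"
proof -
  have hG: "h \<in> G" and hy: "h y = y" and hz: "\<And>z. z > y \<Longrightarrow> h z = z"
    using h by (auto simp: stab_minus_def stab_def)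
  have "(g \<circ> h \<circ> inv g) (g y) = g y" using inv_left[OF g] hy by simp
  moreover have "\<forall>z. z > g y \<longrightarrow> (g \<circ> h \<circ> inv g) z = z"
  proof (intro allI impI)
    fix z assume "z > g y"
    then have "inv g (g y) < inv g z" using G_mono[OF G_inv[OF g]] strict_mono_less by blast
    then have "y < inv g z" using inv_left[OF g] by simp
    then show "(g \<circ> h \<circ> inv g) z = z" using hz inv_right[OF g] by simp
  qed
  ultimately show ?thesis using G_conj[OF g hG] by (simp add: stab_minus_def stab_def)
qed

lemma conj_plus: assumes h: "h \<in> stab_plus G y" and g: "g \<in> G"
  shows "g \<circ> h \<circ> inv g \<in> stab_plus G (g y)"
proof -
  have hG: "h \<in> G" and hy: "h y = y" and hz: "\<And>z. z < y \<Longrightarrow> h z = z"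
    using h by (auto simp: stab_plus_def stab_def)
  have "(g \<circ> h \<circ> inv g) (g y) = g y" using inv_left[OF g] hy by simp
  moreover have "\<forall>z. z < g y \<longrightarrow> (g \<circ> h \<circ> inv g) z = z"
  proof (intro allI impI)
    fix z assume "z < g y"
    then have "inv g z < inv g (g y)" using G_mono[OF G_inv[OF g]] strict_mono_less by blast
    then have "inv g z < y" using inv_left[OF g] by simp
    then show "(g \<circ> h \<circ> inv g) z = z" using hz inv_right[OF g] by simp
  qed
  ultimately show ?thesis using G_conj[OF g hG] by (simp add: stab_plus_def stab_def)
qed

lemma minus_inv: assumes h: "h \<in> stab_minus G y" shows "inv h \<in> stab_minus G y"
proof -
  have hG: "h \<in> G" and hy: "h y = y" and hz: "\<And>z. z > y \<Longrightarrow> h z = z"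
    using h by (auto simp: stab_minus_def stab_def)
  have "inv h y = y" using inv_left[OF hG, of y] hy by simp
  moreover have "\<And>z. z > y \<Longrightarrow> inv h z = z" using inv_left[OF hG] hz by metis
  ultimately show ?thesis using G_inv[OF hG] by (simp add: stab_minus_def stab_def)
qed

lemma plus_inv: assumes h: "h \<in> stab_plus G y" shows "inv h \<in> stab_plus G y"
proof -
  have hG: "h \<in> G" and hy: "h y = y" and hz: "\<And>z. z < y \<Longrightarrow> h z = z"
    using h by (auto simp: stab_plus_def stab_def)
  have "inv h y = y" using inv_left[OF hG, of y] hy by simp
  moreover have "\<And>z. z < y \<Longrightarrow> inv h z = z" using inv_left[OF hG] hz by metis
  ultimately show ?thesis using G_inv[OF hG] by (simp add: stab_plus_def stab_def)
qed

lemma minus_comp: "h \<in> stab_minus G y \<Longrightarrow> k \<in> stab_minus G y \<Longrightarrow> h \<circ> k \<in> stab_minus G y"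
  using G_comp by (auto simp: stab_minus_def stab_def)
lemma plus_comp: "h \<in> stab_plus G y \<Longrightarrow> k \<in> stab_plus G y \<Longrightarrow> h \<circ> k \<in> stab_plus G y"
  using G_comp by (auto simp: stab_plus_def stab_def)

lemma commute: assumes f: "f \<in> stab_minus G y" and k: "k \<in> stab_plus G y"
  shows "f \<circ> k = k \<circ> f"
proof
  fix z
  have fG: "f \<in> G" and fy: "f y = y" and fz: "\<And>z. z > y \<Longrightarrow> f z = z"
    using f by (auto simp: stab_minus_def stab_def)
  have kG: "k \<in> G" and ky: "k y = y" and kz: "\<And>z. z < y \<Longrightarrow> k z = z"
    using k by (auto simp: stab_plus_def stab_def)
  consider "z > y" | "z < y" | "z = y" by linarith
  then show "(f \<circ> k) z = (k \<circ> f) z"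
  proof cases
    case 1
    then have "k y < k z" using G_mono[OF kG] strict_mono_less by blast
    then show ?thesis using fz[OF 1] fz[of "k z"] ky by simp
  next
    case 2
    then have "f z < f y" using G_mono[OF fG] strict_mono_less by blast
    then show ?thesis using kz[OF 2] kz[of "f z"] fy by simp
  qed (simp add: fy ky)
qed

definition P :: "real \<Rightarrow> 'b \<Rightarrow> 'b \<Rightarrow> bool" where
  "P y \<alpha> \<beta> \<longleftrightarrow> (\<exists>h\<in>stab_minus G y. \<exists>k\<in>stab_plus G y. act h \<alpha> = \<beta> \<and> act k \<alpha> = \<beta>)"

lemma key_gen: assumes c: "c \<in> G" and f: "f \<in> G" and com: "f \<circ> c = c \<circ> f"
  and \<alpha>: "\<alpha> \<in> \<Omega>" and cb: "act c \<alpha> = \<beta>"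
  shows "act f \<alpha> = \<alpha> \<longleftrightarrow> act f \<beta> = \<beta>"
proof -
  have "act f \<beta> = act c (act f \<alpha>)"
    using cb act_comp[OF f c \<alpha>] act_comp[OF c f \<alpha>] com by simp
  then show ?thesis using cb act_inj[OF c act_closed[OF f \<alpha>] \<alpha>] by auto
qed

lemma key_minus: "P y \<alpha> \<beta> \<Longrightarrow> \<alpha> \<in> \<Omega> \<Longrightarrow> f \<in> stab_minus G y \<Longrightarrow> (act f \<alpha> = \<alpha> \<longleftrightarrow> act f \<beta> = \<beta>)"
  unfolding P_def using key_gen commute minus_G plus_G by metis

lemma key_plus: "P y \<alpha> \<beta> \<Longrightarrow> \<alpha> \<in> \<Omega> \<Longrightarrow> f \<in> stab_plus G y \<Longrightarrow> (act f \<alpha> = \<alpha> \<longleftrightarrow> act f \<beta> = \<beta>)"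
  unfolding P_def using key_gen commute minus_G plus_G by metis

lemma P_conj: assumes "P y \<alpha> \<beta>" "\<alpha> \<in> \<Omega>" "g \<in> G"
  shows "P (g y) (act g \<alpha>) (act g \<beta>)"
proof -
  obtain h k where h: "h \<in> stab_minus G y" and k: "k \<in> stab_plus G y"
    and e: "act h \<alpha> = \<beta>" "act k \<alpha> = \<beta>" using assms(1) unfolding P_def by blast
  have "act (g \<circ> h \<circ> inv g) (act g \<alpha>) = act g \<beta>"
    using act_conj[OF assms(3) minus_G[OF h] act_closed[OF assms(3,2)]] act_inv_left[OF assms(3,2)] e by simp
  moreover have "act (g \<circ> k \<circ> inv g) (act g \<alpha>) = act g \<beta>"
    using act_conj[OF assms(3) plus_G[OF k] act_closed[OF assms(3,2)]] act_inv_left[OF assms(3,2)] e by simp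
  ultimately show ?thesis unfolding P_def using conj_minus[OF h assms(3)] conj_plus[OF k assms(3)] by blast
qed

lemma fix_minus: "f \<in> G \<Longrightarrow> (\<forall>z. z \<ge> q \<longrightarrow> f z = z) \<Longrightarrow> y \<ge> q \<Longrightarrow> f \<in> stab_minus G y"
  by (simp add: stab_minus_def stab_def)
lemma fix_plus: "f \<in> G \<Longrightarrow> (\<forall>z. z \<le> p \<longrightarrow> f z = z) \<Longrightarrow> y \<le> p \<Longrightarrow> f \<in> stab_plus G y"
  by (simp add: stab_plus_def stab_def)

lemma conj_support: assumes t: "t \<in> G" and f: "\<forall>z. z \<le> p \<or> z \<ge> q \<longrightarrow> f z = z"
  shows "\<forall>z. z \<le> t p \<or> z \<ge> t q \<longrightarrow> (t \<circ> f \<circ> inv t) z = z"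
proof (intro allI impI)
  fix z assume "z \<le> t p \<or> z \<ge> t q"
  moreover have "mono (inv t)" using G_mono[OF G_inv[OF t]] strict_mono_mono by blast
  ultimately have "inv t z \<le> p \<or> inv t z \<ge> q" using inv_left[OF t] by (metis monoD)
  then have "f (inv t z) = inv t z" using f by blast
  then show "(t \<circ> f \<circ> inv t) z = z" using inv_right[OF t] by simp
qed

lemma compact_bounds: assumes "f \<in> compact_part G"
  shows "\<exists>p q. p < q \<and> (\<forall>z. z \<le> p \<or> z \<ge> q \<longrightarrow> f z = z)"
proof -
  have "compact (closure {x. f x \<noteq> x})" using assms by (simp add: compact_part_def)
  then have "bounded {x. f x \<noteq> x}"
    using compact_imp_bounded bounded_subset closure_subset by metis
  then obtain B where B: "\<forall>x\<in>{x. f x \<noteq> x}. norm x \<le> B" using bounded_iff by blast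
  show ?thesis
  proof (intro exI conjI allI impI)
    show "- \<bar>B\<bar> - 1 < \<bar>B\<bar> + 1" by simp
    fix z assume "z \<le> - \<bar>B\<bar> - 1 \<or> z \<ge> \<bar>B\<bar> + 1"
    then have "norm z > B" by auto
    then show "f z = z" using B by force
  qed
qed

lemma bounds_compact: assumes "f \<in> G" "\<forall>z. z \<le> p \<or> z \<ge> q \<longrightarrow> f z = z"
  shows "f \<in> compact_part G"
proof -
  have "{x. f x \<noteq> x} \<subseteq> {p..q}"
  proof
    fix x assume "x \<in> {x. f x \<noteq> x}"
    then have "\<not> (x \<le> p \<or> q \<le> x)" using assms(2) by blast
    then show "x \<in> {p..q}" by auto
  qed
  then have "closure {x. f x \<noteq> x} \<subseteq> {p..q}" by (simp add: closure_minimal)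
  then have "bounded (closure {x. f x \<noteq> x})" using bounded_subset bounded_closed_interval by blast
  then have "compact (closure {x. f x \<noteq> x})" using compact_eq_bounded_closed by blast
  then show ?thesis using assms(1) by (simp add: compact_part_def)
qed


lemma stab_unbounded: assumes u: "u \<in> \<Omega>" shows "\<exists>t\<in>G. act t u = u \<and> t p > q"
proof (rule ccontr)
  assume "\<not> ?thesis"
  hence bd: "\<And>t. t \<in> G \<Longrightarrow> act t u = u \<Longrightarrow> t p \<le> q" by force
  define S where "S = {t p | t. t \<in> G \<and> act t u = u}"
  define s where "s = Sup S"
  have ne: "p \<in> S" unfolding S_def using G_id act_id[OF u] by (metis (mono_tags, lifting) id_apply mem_Collect_eq)
  have bdd: "bdd_above S" unfolding S_def bdd_above_def using bd by blast
  have ub: "\<And>t. t \<in> G \<Longrightarrow> act t u = u \<Longrightarrow> t p \<le> s"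
    unfolding s_def using bdd by (intro cSup_upper) (auto simp: S_def)
  have ge: "s \<le> g s" if g: "g \<in> G" "act g u = u" for g
    unfolding s_def
  proof (rule cSup_least)
    show "S \<noteq> {}" using ne by blast
    fix x assume "x \<in> S"
    then obtain t where t: "t \<in> G" "act t u = u" "x = t p" unfolding S_def by blast
    have "act (inv g) u = u" using act_inv_left[OF g(1) u] g(2) by simp
    then have "act (inv g \<circ> t) u = u" using act_comp[OF G_inv[OF g(1)] t(1) u] t(2) by simp
    then have "(inv g \<circ> t) p \<le> s" using ub G_comp[OF G_inv[OF g(1)] t(1)] by blast
    then have "g ((inv g \<circ> t) p) \<le> g s" using G_mono[OF g(1)] strict_mono_mono monoD by metis
    then show "x \<le> g (Sup S)" using inv_right[OF g(1)] t(3) s_def by simp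
  qed
  have fixs: "g s = s" if g: "g \<in> G" "act g u = u" for g
  proof -
    have "act (inv g) u = u" using act_inv_left[OF g(1) u] g(2) by simp
    then have "s \<le> inv g s" using ge G_inv[OF g(1)] by blast
    then have "g s \<le> g (inv g s)" using G_mono[OF g(1)] strict_mono_mono monoD by metis
    then show ?thesis using ge[OF g] inv_right[OF g(1)] by simp
  qed
  obtain g0 where g0: "g0 \<in> G" "g0 s \<noteq> s" using nf unfolding no_fixed_points_def by blast
  define w0 where "w0 = act g0 u"
  have w0u: "w0 \<noteq> u" using fixs g0 w0_def by metis
  have w0O: "w0 \<in> \<Omega>" using act_closed[OF g0(1) u] w0_def by simp
  have conv: "act c u = u" if c: "c \<in> G" "c s = s" for c
  proof (rule ccontr)
    assume cu: "act c u \<noteq> u"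
    define w1 where "w1 = act c u"
    have w1O: "w1 \<in> \<Omega>" using act_closed[OF c(1) u] w1_def by simp
    obtain d where d: "d \<in> G" "act d u = u" "act d w1 = w0"
      using tt w0O w1O u cu w0u w1_def unfolding two_transitive_def by metis
    define e where "e = inv c \<circ> inv d \<circ> g0"
    have eG: "e \<in> G" unfolding e_def using G_comp G_inv c d g0 by blast
    have "act (inv d) w0 = w1" using act_inv_left[OF d(1) w1O] d(3) by simp
    moreover have "act (inv c) w1 = u" using act_inv_left[OF c(1) u] w1_def by simp
    ultimately have "act e u = u" unfolding e_def w0_def
      using act_comp G_comp G_inv c(1) d(1) g0(1) u act_closed by (metis comp_assoc)
    then have "e s = s" using fixs eG by blast
    then have "inv c (inv d (g0 s)) = s" unfolding e_def by simp
    then have "inv d (g0 s) = c s" using inv_right[OF c(1)] by metis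
    then have "g0 s = d s" using inv_right[OF d(1)] c(2) by metis
    then show False using fixs[OF d(1,2)] g0(2) by simp
  qed
  obtain g where g: "g \<in> G" "act g u = w0" "act g w0 = u"
    using tt w0O u w0u unfolding two_transitive_def by metis
  have "act (g \<circ> g) u = u" using act_comp[OF g(1) g(1) u] g by simp
  then have gg: "g (g s) = s" using fixs G_comp[OF g(1) g(1)] by fastforce
  have gs: "g s \<noteq> s" using conv g w0u by metis
  have sm: "strict_mono g" using G_mono[OF g(1)] .
  show False
  proof (cases "g s < s")
    case True
    then have "g (g s) < g s" using sm strict_mono_less by blast
    then show False using gg True by simp
  next
    case False
    then have "s < g s" using gs by simp
    then have "g s < g (g s)" using sm strict_mono_less by blast
    then show False using gg \<open>s < g s\<close> by simp
  qed
qed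


lemma main_contra:
  assumes Pall: "\<forall>\<alpha>\<in>\<Omega>. \<forall>\<beta>\<in>\<Omega>. \<alpha> \<noteq> \<beta> \<longrightarrow> (\<exists>y. P y \<alpha> \<beta>)"
  and f: "f \<in> G" and u: "u \<in> \<Omega>" "act f u = u"
  and sup: "\<forall>z. z \<le> p \<or> z \<ge> q \<longrightarrow> f z = z"
  and b0: "\<beta>0 \<in> \<Omega>" "act f \<beta>0 \<noteq> \<beta>0"
  shows False
proof -
  obtain t where t: "t \<in> G" "act t u = u" "t p > q" using stab_unbounded[OF u(1)] by blast
  define f2 where "f2 = t \<circ> f \<circ> inv t"
  have f2G: "f2 \<in> G" using G_conj t f f2_def by blast
  have f2sup: "\<forall>z. z \<le> t p \<or> z \<ge> t q \<longrightarrow> f2 z = z" using conj_support[OF t(1) sup] f2_def by simp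
  have tiu: "act (inv t) u = u" using act_inv_left[OF t(1) u(1)] t(2) by simp
  have f2u: "act f2 u = u" using act_conj[OF t(1) f u(1)] tiu u(2) t(2) f2_def by simp
  have supq: "\<forall>z. z \<ge> q \<longrightarrow> f z = z" using sup by blast
  have supp: "\<forall>z. z \<le> t p \<longrightarrow> f2 z = z" using f2sup by blast
  have A: "act f2 \<beta> = \<beta>" if bb: "\<beta> \<in> \<Omega>" "act f \<beta> \<noteq> \<beta>" for \<beta>
  proof -
    have "\<beta> \<noteq> u" using bb u by auto
    then obtain y where y: "P y u \<beta>" using Pall bb(1) u(1) by metis
    have "\<not> y \<ge> q"
    proof
      assume "y \<ge> q"
      then have "f \<in> stab_minus G y" using fix_minus[OF f supq] by blast
      then show False using key_minus[OF y u(1)] u(2) bb(2) by blast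
    qed
    then have "y \<le> t p" using t(3) by simp
    then have "f2 \<in> stab_plus G y" using fix_plus[OF f2G supp] by blast
    then show ?thesis using key_plus[OF y u(1)] f2u by blast
  qed
  have B: "act f \<gamma> = \<gamma>" if bb: "\<gamma> \<in> \<Omega>" "act f2 \<gamma> \<noteq> \<gamma>" for \<gamma>
  proof -
    have "\<gamma> \<noteq> u" using bb f2u by auto
    then obtain y where y: "P y u \<gamma>" using Pall bb(1) u(1) by metis
    have "\<not> y \<le> t p"
    proof
      assume "y \<le> t p"
      then have "f2 \<in> stab_plus G y" using fix_plus[OF f2G supp] by blast
      then show False using key_plus[OF y u(1)] f2u bb(2) by blast
    qed
    then have "y \<ge> q" using t(3) by simp
    then have "f \<in> stab_minus G y" using fix_minus[OF f supq] by blast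
    then show ?thesis using key_minus[OF y u(1)] u(2) by blast
  qed
  define \<gamma>0 where "\<gamma>0 = act t \<beta>0"
  have g0O: "\<gamma>0 \<in> \<Omega>" using act_closed[OF t(1) b0(1)] \<gamma>0_def by simp
  have "act f2 \<gamma>0 = act t (act f \<beta>0)"
    using act_conj[OF t(1) f g0O] act_inv_left[OF t(1) b0(1)] f2_def \<gamma>0_def by simp
  then have m2: "act f2 \<gamma>0 \<noteq> \<gamma>0"
    using act_inj[OF t(1) act_closed[OF f b0(1)] b0(1)] b0(2) \<gamma>0_def by metis
  have fb: "act f2 \<beta>0 = \<beta>0" using A b0 by blast
  have fg: "act f \<gamma>0 = \<gamma>0" using B g0O m2 by blast
  have ne: "\<beta>0 \<noteq> \<gamma>0" using fg b0(2) by auto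
  obtain y where y: "P y \<beta>0 \<gamma>0" using Pall ne b0(1) g0O by metis
  show False
  proof (cases "y \<ge> q")
    case True
    then have "f \<in> stab_minus G y" using fix_minus[OF f supq] by blast
    then show False using key_minus[OF y b0(1)] b0(2) fg by blast
  next
    case False
    then have "y \<le> t p" using t(3) by simp
    then have "f2 \<in> stab_plus G y" using fix_plus[OF f2G supp] by blast
    then show False using key_plus[OF y b0(1)] fb m2 by blast
  qed
qed

lemma Pall_from:
  assumes a: "a \<in> \<Omega>" and b: "b \<in> \<Omega>"
    and u0: "u0 \<in> orbit (stab_minus G x) act a \<inter> orbit (stab_plus G x) act b"
    and v0: "v0 \<in> orbit (stab_minus G x) act a \<inter> orbit (stab_plus G x) act b"
    and ne: "u0 \<noteq> v0"
  shows "\<forall>\<alpha>\<in>\<Omega>. \<forall>\<beta>\<in>\<Omega>. \<alpha> \<noteq> \<beta> \<longrightarrow> (\<exists>y. P y \<alpha> \<beta>)"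
proof -
  obtain h1 h2 where h: "h1 \<in> stab_minus G x" "h2 \<in> stab_minus G x" "u0 = act h1 a" "v0 = act h2 a"
    using u0 v0 unfolding orbit_def by blast
  obtain k1 k2 where k: "k1 \<in> stab_plus G x" "k2 \<in> stab_plus G x" "u0 = act k1 b" "v0 = act k2 b"
    using u0 v0 unfolding orbit_def by blast
  have u0O: "u0 \<in> \<Omega>" using h(1,3) act_closed minus_G a by blast
  have v0O: "v0 \<in> \<Omega>" using h(2,4) act_closed minus_G a by blast
  have hm: "h2 \<circ> inv h1 \<in> stab_minus G x" using minus_comp minus_inv h by blast
  have km: "k2 \<circ> inv k1 \<in> stab_plus G x" using plus_comp plus_inv k by blast
  have "act (h2 \<circ> inv h1) u0 = v0"
    using act_comp[OF minus_G[OF h(2)] G_inv[OF minus_G[OF h(1)]] u0O] act_inv_left[OF minus_G[OF h(1)] a] h by simp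
  moreover have "act (k2 \<circ> inv k1) u0 = v0"
    using act_comp[OF plus_G[OF k(2)] G_inv[OF plus_G[OF k(1)]] u0O] act_inv_left[OF plus_G[OF k(1)] b] k by simp
  ultimately have P0: "P x u0 v0" unfolding P_def using hm km by blast
  show ?thesis
  proof (intro ballI impI)
    fix \<alpha> \<beta> assume "\<alpha> \<in> \<Omega>" "\<beta> \<in> \<Omega>" "\<alpha> \<noteq> \<beta>"
    then obtain g where g: "g \<in> G" "act g u0 = \<alpha>" "act g v0 = \<beta>"
      using tt u0O v0O ne unfolding two_transitive_def by metis
    show "\<exists>y. P y \<alpha> \<beta>" using P_conj[OF P0 u0O g(1)] g by blast
  qed
qed

lemma N_trans: assumes "compact_part G \<noteq> {id}" shows "transitive_on (compact_part G) \<Omega> act"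
proof -
  have idN: "id \<in> compact_part G" using G_id by (simp add: compact_part_def)
  then obtain n where n: "n \<in> compact_part G" "n \<noteq> id" using assms by blast
  have nG: "n \<in> G" using n by (simp add: compact_part_def)
  obtain \<omega> where w: "\<omega> \<in> \<Omega>" "act n \<omega> \<noteq> \<omega>" using fa n nG unfolding faithful_def by blast
  obtain p q where pq: "\<forall>z. z \<le> p \<or> z \<ge> q \<longrightarrow> n z = z" using compact_bounds[OF n(1)] by blast
  show ?thesis unfolding transitive_on_def
  proof (intro ballI)
    fix \<alpha> \<beta> assume ab: "\<alpha> \<in> \<Omega>" "\<beta> \<in> \<Omega>"
    show "\<exists>h\<in>compact_part G. act h \<alpha> = \<beta>"
    proof (cases "\<alpha> = \<beta>")
      case True then show ?thesis using idN act_id ab by blast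
    next
      case False
      have nwO: "act n \<omega> \<in> \<Omega>" using act_closed[OF nG w(1)] .
      obtain g where g: "g \<in> G" "act g \<omega> = \<alpha>" "act g (act n \<omega>) = \<beta>"
        using tt w nwO ab False unfolding two_transitive_def by metis
      have "g \<circ> n \<circ> inv g \<in> compact_part G"
        using bounds_compact[OF G_conj[OF g(1) nG] conj_support[OF g(1) pq]] .
      moreover have "act (g \<circ> n \<circ> inv g) \<alpha> = \<beta>"
        using act_conj[OF g(1) nG ab(1)] act_inv_left[OF g(1) w(1)] g by simp
      ultimately show ?thesis by blast
    qed
  qed
qed

end

theorem proposition5p1:
  fixes G :: "(real \<Rightarrow> real) set"
    and \<Omega> :: "'b set"
    and act :: "(real \<Rightarrow> real) \<Rightarrow> 'b \<Rightarrow> 'b"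
  assumes "homeo_subgroup G"
    and "no_fixed_points G"
    and "compact_part G \<noteq> {id}"
    and "is_action G \<Omega> act"
    and "faithful G \<Omega> act"
    and "two_transitive G \<Omega> act"
  shows "regular_on (compact_part G) \<Omega> act \<or>
         (\<forall>x::real. \<forall>a\<in>\<Omega>. \<forall>b\<in>\<Omega>. \<forall>u v.
            u \<in> orbit (stab_minus G x) act a \<inter> orbit (stab_plus G x) act b \<longrightarrow>
            v \<in> orbit (stab_minus G x) act a \<inter> orbit (stab_plus G x) act b \<longrightarrow> u = v)"
proof -
  interpret S5 G \<Omega> act using assms(1,2,4,5,6) by unfold_locales
  show ?thesis
  proof (cases "\<forall>x::real. \<forall>a\<in>\<Omega>. \<forall>b\<in>\<Omega>. \<forall>u v.
            u \<in> orbit (stab_minus G x) act a \<inter> orbit (stab_plus G x) act b \<longrightarrow>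
            v \<in> orbit (stab_minus G x) act a \<inter> orbit (stab_plus G x) act b \<longrightarrow> u = v")
    case True then show ?thesis by blast
  next
    case False
    then obtain x a b u0 v0 where a: "a \<in> \<Omega>" and b: "b \<in> \<Omega>"
      and u0: "u0 \<in> orbit (stab_minus G x) act a \<inter> orbit (stab_plus G x) act b"
      and v0: "v0 \<in> orbit (stab_minus G x) act a \<inter> orbit (stab_plus G x) act b"
      and ne: "u0 \<noteq> v0" by blast
    have Pall: "\<forall>\<alpha>\<in>\<Omega>. \<forall>\<beta>\<in>\<Omega>. \<alpha> \<noteq> \<beta> \<longrightarrow> (\<exists>y. P y \<alpha> \<beta>)"
      using Pall_from[OF a b u0 v0 ne] .
    have "regular_on (compact_part G) \<Omega> act"
      unfolding regular_on_def
    proof (intro conjI ballI impI)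
      show "transitive_on (compact_part G) \<Omega> act" using N_trans[OF assms(3)] .
      fix \<alpha> f assume al: "\<alpha> \<in> \<Omega>" and fN: "f \<in> compact_part G" and fx: "act f \<alpha> = \<alpha>"
      show "f = id"
      proof (rule ccontr)
        assume fid: "f \<noteq> id"
        have fG: "f \<in> G" using fN by (simp add: compact_part_def)
        obtain \<beta>0 where b0: "\<beta>0 \<in> \<Omega>" "act f \<beta>0 \<noteq> \<beta>0"
          using fa fG fid unfolding faithful_def by blast
        obtain p q where pq: "\<forall>z. z \<le> p \<or> z \<ge> q \<longrightarrow> f z = z" using compact_bounds[OF fN] by blast
        show False using main_contra[OF Pall fG al fx pq b0] .
      qed
    qed
    then show ?thesis by blast
  qed
qed

end
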